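(* Let $N=\{1,\dots,n\}$, let $w:2^N\to\mathbb{R}$ be the characteristic function of the data sharing game (with $w(\emptyset)=0$), let $\epsilon\ge 0$, and let $(\pi_0,\pi_1,\dots,\pi_n)$ be any vector in the strong $\epsilon$-core $$\mathrm{Core}_\epsilon(N)=\Big\{(\pi_0,\dots,\pi_n)\in\mathbb{R}^{n+1}_{+}:\ \sum_{i\in N}\pi_i+\pi_0=w(N),\ \sum_{i\in S}\pi_i+\pi_0\ge w(S)-\epsilon\ \text{for all } S\in 2^N\setminus\{\emptyset\}\Big\}.$$ Then for every $i\in N$, $\pi_i\le \pi_i^{VCG}+\epsilon$, where $\pi_i^{VCG}=w(N)-w(N\setminus\{i\})$.
   Context: Data sharing game: participants $N=\{1,\dots,n\}$ with (input) datasets $\hat D_i$, and a server $0$ with budget $b_0$. $F$ maps a collection of datasets to a global model, $A$ is an accuracy metric, $h_i=k_iA$ with $k_i>0$, and $v_i(M,\hat D_i)=\mathbb{E}[\max\{h_i(M)-h_i(F(\hat D_i)),0\}]$. The characteristic function is $w(S)=\sum_{i\in S}v_i(F(\hat D_S),\hat D_i)+b_0$ for nonempty $S\subseteq N$ (where $\hat D_S=\{\hat D_i\}_{i\in S}$) and $w(\emptyset)=0$. $\pi_i^{VCG}$ is called the VCG surplus of participant $i$. *)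

theory Defs
  imports "HOL-Probability.Probability"
begin

text \<open>A collection of datasets {D_i}_{i in S} is represented as a partial map
  (Some (D i) for i in S, None otherwise). The (possibly randomized) training
  procedure F returns a distribution over models.\<close>

definition datasets_of :: "(nat \<Rightarrow> 'd) \<Rightarrow> nat set \<Rightarrow> (nat \<Rightarrow> 'd option)" where
  "datasets_of D S = (\<lambda>j. if j \<in> S then Some (D j) else None)"

definition valuation ::
  "((nat \<Rightarrow> 'd option) \<Rightarrow> 'm pmf) \<Rightarrow> ('m \<Rightarrow> real) \<Rightarrow> (nat \<Rightarrow> real) \<Rightarrow> (nat \<Rightarrow> 'd)
    \<Rightarrow> nat \<Rightarrow> 'm pmf \<Rightarrow> real" where
  "valuation F A k D i M =
     measure_pmf.expectation (pair_pmf M (F (datasets_of D {i})))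
       (\<lambda>(m, m'). max (k i * A m - k i * A m') 0)"

definition char_fun ::
  "((nat \<Rightarrow> 'd option) \<Rightarrow> 'm pmf) \<Rightarrow> ('m \<Rightarrow> real) \<Rightarrow> (nat \<Rightarrow> real) \<Rightarrow> (nat \<Rightarrow> 'd)
    \<Rightarrow> real \<Rightarrow> nat set \<Rightarrow> real" where
  "char_fun F A k D b0 S =
     (if S = {} then 0
      else (\<Sum>i\<in>S. valuation F A k D i (F (datasets_of D S))) + b0)"

definition eps_core :: "nat \<Rightarrow> (nat set \<Rightarrow> real) \<Rightarrow> real \<Rightarrow> (nat \<Rightarrow> real) set" where
  "eps_core n w \<epsilon> = {\<pi>. (\<forall>i\<in>{0..n}. \<pi> i \<ge> 0)
      \<and> (\<Sum>i\<in>{1..n}. \<pi> i) + \<pi> 0 = w {1..n}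
      \<and> (\<forall>S. S \<subseteq> {1..n} \<and> S \<noteq> {} \<longrightarrow> (\<Sum>i\<in>S. \<pi> i) + \<pi> 0 \<ge> w S - \<epsilon>)}"

definition vcg_surplus :: "nat \<Rightarrow> (nat set \<Rightarrow> real) \<Rightarrow> nat \<Rightarrow> real" where
  "vcg_surplus n w i = w {1..n} - w ({1..n} - {i})"

end

theory Submission
  imports Defs
begin

lemma arith_aux:
  fixes a s p W x e T :: real
  assumes "T + p = W" "T = a + s" "s + p \<ge> x - e"
  shows "a \<le> W - x + e"
  using assms by linarith

lemma core_gen:
  fixes w :: "nat set \<Rightarrow> real"
  assumes "w {} = 0" "\<epsilon> \<ge> 0" "\<pi> \<in> eps_core n w \<epsilon>" "i \<in> {1..n}"
  shows "\<pi> i \<le> vcg_surplus n w i + \<epsilon>"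
proof -
  from assms(3) have nn: "\<forall>j\<in>{0..n}. \<pi> j \<ge> 0"
    and tot: "(\<Sum>j\<in>{1..n}. \<pi> j) + \<pi> 0 = w {1..n}"
    and co: "\<forall>S. S \<subseteq> {1..n} \<and> S \<noteq> {} \<longrightarrow> (\<Sum>j\<in>S. \<pi> j) + \<pi> 0 \<ge> w S - \<epsilon>"
    unfolding eps_core_def by auto
  let ?S = "{1..n} - {i}"
  have split: "(\<Sum>j\<in>{1..n}. \<pi> j) = \<pi> i + (\<Sum>j\<in>?S. \<pi> j)"
    using assms(4) by (simp add: sum.remove)
  show ?thesis
  proof (cases "?S = {}")
    case True
    then have "(\<Sum>j\<in>?S. \<pi> j) = 0" by (simp only: sum.empty)
    moreover have "\<pi> 0 \<ge> 0" using nn by auto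
    moreover have "w ?S = 0" using arg_cong[OF True, of w] assms(1) by (rule trans)
    ultimately have "(\<Sum>j\<in>?S. \<pi> j) + \<pi> 0 \<ge> w ?S - \<epsilon>" using assms(2) by linarith
    then show ?thesis unfolding vcg_surplus_def by (rule arith_aux[OF tot split])
  next
    case False
    then have sub: "?S \<subseteq> {1..n} \<and> ?S \<noteq> {}" by blast
    have "(\<Sum>j\<in>?S. \<pi> j) + \<pi> 0 \<ge> w ?S - \<epsilon>" using mp[OF spec[OF co, of ?S] sub] .
    then show ?thesis unfolding vcg_surplus_def by (rule arith_aux[OF tot split])
  qed
qed

theorem lemma1:
  fixes n :: nat and F :: "(nat \<Rightarrow> 'd option) \<Rightarrow> 'm pmf" and A :: "'m \<Rightarrow> real"
    and k :: "nat \<Rightarrow> real" and D :: "nat \<Rightarrow> 'd" and b0 :: real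
    and \<epsilon> :: real and \<pi> :: "nat \<Rightarrow> real"
  assumes "\<forall>i\<in>{1..n}. k i > 0"
    and "\<epsilon> \<ge> 0"
    and "\<pi> \<in> eps_core n (char_fun F A k D b0) \<epsilon>"
  shows "\<forall>i\<in>{1..n}. \<pi> i \<le> vcg_surplus n (char_fun F A k D b0) i + \<epsilon>"
proof
  fix i assume "i \<in> {1..n}"
  moreover have "char_fun F A k D b0 {} = 0" by (simp add: char_fun_def)
  ultimately show "\<pi> i \<le> vcg_surplus n (char_fun F A k D b0) i + \<epsilon>"
    using core_gen assms(2,3) by blast
qed

end
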